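(* Let $d\geq 2$ be an integer, let $\mathbf{k}=(k^1,\dots,k^d)\in\mathbb{R}^d$ with $\mathbf{k}\neq 0$, and write $k_i=k^i$, $k^2=\delta_{ij}k^ik^j$ (repeated indices summed over $1,\dots,d$). Let $\varphi_{ij}(z)$, $i,j=1,\dots,d$, be twice differentiable complex-valued functions of $z\in(0,\infty)$ with $\varphi_{ij}=\varphi_{ji}$, and set $\varphi_0=\delta^{ij}\varphi_{ij}$. Define the differential operator $$\hat E_s=\partial_z^2+\frac{5-d}{z}\partial_z+\frac{4-2d}{z^2}-k^2,$$ and suppose that for all $i,j$ $$\hat E_s\varphi_{ij}= -k_jk^m\varphi_{im}-k_ik^m\varphi_{mj}+k_ik_j\varphi_0 .$$ Define $$\bar\varphi_{ij}=\varphi_{ij}-\frac{k_ik^m}{k^2}\varphi_{mj}-\frac{k_jk^m}{k^2}\varphi_{mi}+\frac{k_ik_jk^mk^n}{k^4}\varphi_{mn}-\frac{1}{d-1}\Big(\delta_{ij}-\frac{k_ik_j}{k^2}\Big)\Big(\varphi_0-\frac{k^mk^n}{k^2}\varphi_{mn}\Big).$$ Then $\bar\varphi_{ij}$ is traceless and transverse, i.e. $\delta^{ij}\bar\varphi_{ij}=0$ and $k^i\bar\varphi_{ij}=0$, and it satisfies the homogeneous equation $\hat E_s\bar\varphi_{ij}(z)=0$ for all $i,j$.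
   Context: This is the momentum-space (Fourier transformed in the boundary coordinates $x^i$, with $\partial_m\to ik_m$) form of the equation for the symmetric component $\varphi_{ij}$ of a hook-type gauge field in Euclidean $AdS_{d+1}$ in Poincaré coordinates, $z$ being the radial coordinate; indices are raised and lowered with the Euclidean metric $\delta_{ij}$, and $\mathbf{k}$ is held fixed. *)

theory Defs
  imports "HOL-Analysis.Analysis"
begin

text \<open>Index set {1..d} is modelled by a finite type 'n with d = CARD('n);
  momenta k are vectors in real^'n. Fields are complex-valued functions of z.\<close>

definition ksq :: "real ^ 'n \<Rightarrow> real" where
  "ksq k = (\<Sum>i\<in>UNIV. k $ i * k $ i)"

definition dz :: "(real \<Rightarrow> complex) \<Rightarrow> real \<Rightarrow> complex" where
  "dz f z = vector_derivative f (at z)"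

definition Es :: "real ^ 'n \<Rightarrow> (real \<Rightarrow> complex) \<Rightarrow> real \<Rightarrow> complex" where
  "Es k f z = dz (dz f) z
      + complex_of_real ((5 - real CARD('n)) / z) * dz f z
      + complex_of_real ((4 - 2 * real CARD('n)) / z ^ 2) * f z
      - complex_of_real (ksq k) * f z"

definition trace0 :: "('n \<Rightarrow> 'n \<Rightarrow> real \<Rightarrow> complex) \<Rightarrow> real \<Rightarrow> complex" where
  "trace0 \<phi> z = (\<Sum>i\<in>UNIV. \<phi> i i z)"

definition phibar :: "real ^ 'n \<Rightarrow> ('n \<Rightarrow> 'n \<Rightarrow> real \<Rightarrow> complex) \<Rightarrow> 'n \<Rightarrow> 'n \<Rightarrow> real \<Rightarrow> complex" where
  "phibar k \<phi> i j z =
     \<phi> i j z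
     - (\<Sum>m\<in>UNIV. complex_of_real (k $ i * k $ m / ksq k) * \<phi> m j z)
     - (\<Sum>m\<in>UNIV. complex_of_real (k $ j * k $ m / ksq k) * \<phi> m i z)
     + (\<Sum>m\<in>UNIV. \<Sum>n\<in>UNIV. complex_of_real (k $ i * k $ j * k $ m * k $ n / (ksq k) ^ 2) * \<phi> m n z)
     - complex_of_real (1 / (real CARD('n) - 1)) *
         complex_of_real ((if i = j then 1 else 0) - k $ i * k $ j / ksq k) *
         (trace0 \<phi> z - (\<Sum>m\<in>UNIV. \<Sum>n\<in>UNIV. complex_of_real (k $ m * k $ n / ksq k) * \<phi> m n z))"

end

theory Submission imports Defs begin

definition good :: "(real \<Rightarrow> complex) \<Rightarrow> bool" where
  "good f \<longleftrightarrow> (\<forall>z>0. f differentiable (at z) \<and> dz f differentiable (at z))"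

lemma dz_cong:
  assumes "\<And>x. x > 0 \<Longrightarrow> f x = g x" "z > 0"
  shows "dz f z = dz g z"
proof -
  have "eventually (\<lambda>x. x \<in> {0<..}) (nhds z)"
    using assms(2) by (intro eventually_nhds_in_open) auto
  hence "eventually (\<lambda>x. x \<in> UNIV \<longrightarrow> f x = g x) (nhds z)"
    by eventually_elim (use assms(1) in auto)
  thus ?thesis unfolding dz_def
    by (intro vector_derivative_cong_eq) auto
qed

lemma diff_cong:
  fixes f g :: "real \<Rightarrow> complex"
  assumes "\<And>x. x > 0 \<Longrightarrow> f x = g x" "z > 0" "f differentiable (at z)"
  shows "g differentiable (at z)"
proof -
  from assms(3) have "(f has_vector_derivative vector_derivative f (at z)) (at z)"
    by (rule vector_derivative_works[THEN iffD1])
  hence "(g has_vector_derivative vector_derivative f (at z)) (at z)"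
    by (rule has_vector_derivative_transform_within_open[where S="{0<..}"]) (use assms in auto)
  thus ?thesis by (rule differentiableI_vector)
qed

lemma good_add [simp]:
  assumes f: "good f" and g: "good g" shows "good (\<lambda>x. f x + g x)"
  unfolding good_def
proof (intro allI impI conjI)
  fix z :: real assume z: "z > 0"
  have a: "f differentiable at z" "g differentiable at z" "dz f differentiable at z" "dz g differentiable at z"
    using f g z unfolding good_def by blast+
  show "(\<lambda>x. f x + g x) differentiable at z" using a(1,2) by (rule differentiable_add)
  have e: "dz f x + dz g x = dz (\<lambda>x. f x + g x) x" if x: "x > 0" for x
  proof -
    have "f differentiable at x" "g differentiable at x" using f g x unfolding good_def by blast+
    thus ?thesis unfolding dz_def by (rule vector_derivative_add_at[symmetric])
  qed
  have dd: "(\<lambda>x. dz f x + dz g x) differentiable at z" using a(3,4) by (rule differentiable_add)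
  show "dz (\<lambda>x. f x + g x) differentiable at z"
    using diff_cong[OF e z dd] by simp
qed

lemma Es_add [simp]:
  assumes f: "good f" and g: "good g" and z: "z > 0" shows "Es k (\<lambda>x. f x + g x) z = Es k f z + Es k g z"
proof -
  have e: "dz f x + dz g x = dz (\<lambda>x. f x + g x) x" if x: "x > 0" for x
  proof -
    have "f differentiable at x" "g differentiable at x" using f g x unfolding good_def by blast+
    thus ?thesis unfolding dz_def by (rule vector_derivative_add_at[symmetric])
  qed
  have a: "dz f differentiable at z" "dz g differentiable at z"
    using f g z unfolding good_def by blast+
  have "dz (dz (\<lambda>x. f x + g x)) z = dz (\<lambda>x. dz f x + dz g x) z"
    by (rule dz_cong[OF _ z]) (rule e[symmetric])
  also have "\<dots> = dz (dz f) z + dz (dz g) z"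
    unfolding dz_def[of "\<lambda>x. dz f x + dz g x"] using a unfolding dz_def by (rule vector_derivative_add_at)
  finally show ?thesis using e[OF z, symmetric] unfolding Es_def by (simp add: ring_distribs)
qed

lemma good_diff [simp]:
  assumes f: "good f" and g: "good g" shows "good (\<lambda>x. f x - g x)"
  unfolding good_def
proof (intro allI impI conjI)
  fix z :: real assume z: "z > 0"
  have a: "f differentiable at z" "g differentiable at z" "dz f differentiable at z" "dz g differentiable at z"
    using f g z unfolding good_def by blast+
  show "(\<lambda>x. f x - g x) differentiable at z" using a(1,2) by (rule differentiable_diff)
  have e: "dz f x - dz g x = dz (\<lambda>x. f x - g x) x" if x: "x > 0" for x
  proof -
    have "f differentiable at x" "g differentiable at x" using f g x unfolding good_def by blast+
    thus ?thesis unfolding dz_def by (rule vector_derivative_diff_at[symmetric])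
  qed
  have dd: "(\<lambda>x. dz f x - dz g x) differentiable at z" using a(3,4) by (rule differentiable_diff)
  show "dz (\<lambda>x. f x - g x) differentiable at z"
    using diff_cong[OF e z dd] by simp
qed

lemma Es_diff [simp]:
  assumes f: "good f" and g: "good g" and z: "z > 0" shows "Es k (\<lambda>x. f x - g x) z = Es k f z - Es k g z"
proof -
  have e: "dz f x - dz g x = dz (\<lambda>x. f x - g x) x" if x: "x > 0" for x
  proof -
    have "f differentiable at x" "g differentiable at x" using f g x unfolding good_def by blast+
    thus ?thesis unfolding dz_def by (rule vector_derivative_diff_at[symmetric])
  qed
  have a: "dz f differentiable at z" "dz g differentiable at z"
    using f g z unfolding good_def by blast+
  have "dz (dz (\<lambda>x. f x - g x)) z = dz (\<lambda>x. dz f x - dz g x) z"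
    by (rule dz_cong[OF _ z]) (rule e[symmetric])
  also have "\<dots> = dz (dz f) z - dz (dz g) z"
    unfolding dz_def[of "\<lambda>x. dz f x - dz g x"] using a unfolding dz_def by (rule vector_derivative_diff_at)
  finally show ?thesis using e[OF z, symmetric] unfolding Es_def by (simp add: ring_distribs)
qed

lemma good_cmult [simp]:
  assumes f: "good f" shows "good (\<lambda>x. c * f x)"
  unfolding good_def
proof (intro allI impI conjI)
  fix z :: real assume z: "z > 0"
  have a: "f differentiable at z" "dz f differentiable at z"
    using f z unfolding good_def by blast+
  show "(\<lambda>x. c * f x) differentiable at z" using a(1) by simp
  have e: "c * dz f x = dz (\<lambda>x. c * f x) x" if x: "x > 0" for x
  proof -
    have "f differentiable at x" using f x unfolding good_def by blast
    thus ?thesis unfolding dz_def by simp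
  qed
  have dd: "(\<lambda>x. c * dz f x) differentiable at z" using a(2) by simp
  show "dz (\<lambda>x. c * f x) differentiable at z"
    using diff_cong[OF e z dd] by simp
qed

lemma Es_cmult [simp]:
  assumes f: "good f" and z: "z > 0" shows "Es k (\<lambda>x. c * f x) z = c * Es k f z"
proof -
  have e: "c * dz f x = dz (\<lambda>x. c * f x) x" if x: "x > 0" for x
  proof -
    have "f differentiable at x" using f x unfolding good_def by blast
    thus ?thesis unfolding dz_def by simp
  qed
  have a: "dz f differentiable at z" using f z unfolding good_def by blast
  have "dz (dz (\<lambda>x. c * f x)) z = dz (\<lambda>x. c * dz f x) z"
    by (rule dz_cong[OF _ z]) (rule e[symmetric])
  also have "\<dots> = c * dz (dz f) z"
    using a unfolding dz_def by simp
  finally show ?thesis using e[OF z, symmetric] unfolding Es_def by (simp add: ring_distribs mult_ac)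
qed

lemma dz_zero: "dz (\<lambda>x. 0) = (\<lambda>x. 0)"
  by (simp add: dz_def fun_eq_iff)

lemma good_zero: "good (\<lambda>x. 0)"
  by (simp add: good_def dz_zero)

lemma Es_zero: "Es k (\<lambda>x. 0) z = 0"
  by (simp add: Es_def dz_zero)

lemma good_sum [simp]:
  assumes "\<And>a. a \<in> A \<Longrightarrow> good (f a)" shows "good (\<lambda>x. \<Sum>a\<in>A. f a x)"
  using assms
proof (induction A rule: infinite_finite_induct)
  case (infinite A) thus ?case by (simp add: good_zero)
next
  case empty thus ?case by (simp add: good_zero)
next
  case (insert a A)
  have "good (\<lambda>x. f a x + (\<Sum>a\<in>A. f a x))"
    by (rule good_add) (use insert in \<open>auto\<close>)
  thus ?case using insert by simp
qed

lemma Es_sum [simp]: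
  assumes "\<And>a. a \<in> A \<Longrightarrow> good (f a)" "z > 0"
  shows "Es k (\<lambda>x. \<Sum>a\<in>A. f a x) z = (\<Sum>a\<in>A. Es k (f a) z)"
  using assms(1)
proof (induction A rule: infinite_finite_induct)
  case (infinite A) thus ?case by (simp add: Es_zero)
next
  case empty thus ?case by (simp add: Es_zero)
next
  case (insert a A)
  have "Es k (\<lambda>x. f a x + (\<Sum>a\<in>A. f a x)) z = Es k (f a) z + Es k (\<lambda>x. \<Sum>a\<in>A. f a x) z"
    using Es_add[of "f a" "\<lambda>x. \<Sum>a\<in>A. f a x" z k] insert assms(2) by simp
  thus ?case using insert by simp
qed

lemma Es_phibar:
  assumes g: "\<And>a b. good (\<phi> a b)" and z: "z > 0"
  shows "Es k (phibar k \<phi> i j) z = phibar k (\<lambda>a b w. Es k (\<phi> a b) w) i j z"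
  unfolding phibar_def[abs_def] trace0_def[abs_def]
  by (simp only: Es_add Es_diff Es_cmult Es_sum good_add good_diff good_cmult good_sum g z)

lemma K_eq: "complex_of_real (ksq k) = (\<Sum>i\<in>UNIV. complex_of_real (k $ i) * complex_of_real (k $ i))"
  by (simp add: ksq_def)

lemma K_nz: "(k::real^'n) \<noteq> 0 \<Longrightarrow> ksq k \<noteq> 0"
proof -
  assume "k \<noteq> 0"
  moreover have "ksq k = inner k k" by (simp add: ksq_def inner_vec_def)
  ultimately show ?thesis by simp
qed

lemma sum_coef1:
  "(\<Sum>m\<in>UNIV. complex_of_real (a * k $ m / c) * f m) = complex_of_real a / complex_of_real c * (\<Sum>m\<in>UNIV. complex_of_real (k$m) * f m)"
  unfolding sum_distrib_left by (rule sum.cong) simp_all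

lemma sum_coef2:
  "(\<Sum>m\<in>UNIV. \<Sum>n\<in>UNIV. complex_of_real (a * k $ m * k $ n / c) * f m n) = complex_of_real a / complex_of_real c * (\<Sum>m\<in>UNIV. \<Sum>n\<in>UNIV. complex_of_real (k$m) * complex_of_real (k$n) * f m n)"
  unfolding sum_distrib_left by (rule sum.cong, simp, rule sum.cong) simp_all

lemma phibar_form:
  fixes k :: "real^'n"
  shows "phibar k \<phi> i j z =
     \<phi> i j z
     - complex_of_real (k$i) / complex_of_real (ksq k) * (\<Sum>m\<in>UNIV. complex_of_real (k$m) * \<phi> m j z)
     - complex_of_real (k$j) / complex_of_real (ksq k) * (\<Sum>m\<in>UNIV. complex_of_real (k$m) * \<phi> m i z)
     + complex_of_real (k$i) * complex_of_real (k$j) / (complex_of_real (ksq k))^2 *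
         (\<Sum>m\<in>UNIV. \<Sum>n\<in>UNIV. complex_of_real (k$m) * complex_of_real (k$n) * \<phi> m n z)
     - ((if i = j then 1 else 0) - complex_of_real (k$i) * complex_of_real (k$j) / complex_of_real (ksq k))
         / (of_nat CARD('n) - 1) *
       ((\<Sum>m\<in>UNIV. \<phi> m m z) - 1 / complex_of_real (ksq k) *
         (\<Sum>m\<in>UNIV. \<Sum>n\<in>UNIV. complex_of_real (k$m) * complex_of_real (k$n) * \<phi> m n z))"
proof -
  have e1: "(\<Sum>m\<in>UNIV. \<Sum>n\<in>UNIV. complex_of_real (k $ i * k $ j * k $ m * k $ n / (ksq k) ^ 2) * \<phi> m n z)
     = complex_of_real (k$i) * complex_of_real (k$j) / (complex_of_real (ksq k))^2 *
         (\<Sum>m\<in>UNIV. \<Sum>n\<in>UNIV. complex_of_real (k$m) * complex_of_real (k$n) * \<phi> m n z)"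
    using sum_coef2[of "k $ i * k $ j" k "(ksq k)^2" "\<lambda>m n. \<phi> m n z"] by simp
  have e2: "(\<Sum>m\<in>UNIV. \<Sum>n\<in>UNIV. complex_of_real (k $ m * k $ n / ksq k) * \<phi> m n z)
     = 1 / complex_of_real (ksq k) * (\<Sum>m\<in>UNIV. \<Sum>n\<in>UNIV. complex_of_real (k$m) * complex_of_real (k$n) * \<phi> m n z)"
    using sum_coef2[of 1 k "ksq k" "\<lambda>m n. \<phi> m n z"] by simp
  have e3: "complex_of_real (1 / (real CARD('n) - 1)) * complex_of_real ((if i = j then 1 else 0) - k $ i * k $ j / ksq k)
     = ((if i = j then 1 else 0) - complex_of_real (k$i) * complex_of_real (k$j) / complex_of_real (ksq k))
         / (of_nat CARD('n) - 1)"
    by (simp add: of_real_diff)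
  show ?thesis
    unfolding phibar_def trace0_def unfolding e1 e2 e3 unfolding sum_coef1 ..
qed

lemma traceless:
  fixes k :: "real^'n"
  assumes knz: "k \<noteq> 0" and d2: "CARD('n) \<ge> 2"
  shows "(\<Sum>i\<in>UNIV. phibar k \<phi> i i z) = 0"
proof -
  define kc where "kc i = complex_of_real (k$i)" for i
  define K where "K = complex_of_real (ksq k)"
  define A where "A j = (\<Sum>m\<in>UNIV. kc m * \<phi> m j z)" for j
  define B where "B = (\<Sum>m\<in>UNIV. \<Sum>n\<in>UNIV. kc m * kc n * \<phi> m n z)"
  define T where "T = (\<Sum>m\<in>UNIV. \<phi> m m z)"
  define d where "d = (of_nat CARD('n) :: complex)"
  have K0: "K \<noteq> 0" using K_nz[OF knz] by (simp add: K_def)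
  have d1: "d - 1 \<noteq> 0" using d2 by (simp add: d_def)
  have sK: "(\<Sum>i\<in>UNIV. kc i * kc i) = K" by (simp add: K_eq kc_def K_def)
  have sA: "(\<Sum>i\<in>UNIV. kc i * A i) = B"
    unfolding A_def B_def by (subst sum.swap) (simp add: sum_distrib_left mult_ac)
  have pf: "phibar k \<phi> i j z = \<phi> i j z - kc i / K * A j - kc j / K * A i
      + kc i * kc j / K^2 * B - ((if i = j then 1 else 0) - kc i * kc j / K) / (d - 1) * (T - 1 / K * B)" for i j
    unfolding phibar_form kc_def K_def A_def B_def T_def d_def ..
  define X where "X = T - 1 / K * B"
  have "(\<Sum>i\<in>UNIV. phibar k \<phi> i i z) = (\<Sum>i\<in>UNIV. \<phi> i i z) - (\<Sum>i\<in>UNIV. kc i / K * A i) - (\<Sum>i\<in>UNIV. kc i / K * A i)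
     + (\<Sum>i\<in>UNIV. kc i * kc i / K^2 * B) - (\<Sum>i\<in>UNIV. ((if i = i then 1 else 0) - kc i * kc i / K) / (d - 1) * X)"
    unfolding pf X_def by (simp only: sum.distrib sum_subtractf)
  also have "(\<Sum>i\<in>UNIV. kc i / K * A i) = B / K"
    unfolding sA[symmetric] sum_divide_distrib by simp
  also have "(\<Sum>i\<in>UNIV. kc i * kc i / K^2 * B) = K / K^2 * B"
    unfolding sK[symmetric] sum_divide_distrib sum_distrib_right by simp
  also have "(\<Sum>i\<in>UNIV. ((if i = i then 1 else 0) - kc i * kc i / K) / (d - 1) * X)
      = (\<Sum>i\<in>UNIV. ((if i = i then 1 else 0) - kc i * kc i / K)) / (d - 1) * X"
    by (simp only: sum_distrib_right[symmetric] sum_divide_distrib[symmetric])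
  also have "(\<Sum>i\<in>UNIV. ((if i = i then 1 else 0) - kc i * kc i / K)) = d - K / K"
    unfolding sK[symmetric] sum_divide_distrib by (simp add: sum_subtractf d_def)
  finally show ?thesis unfolding X_def T_def[symmetric] using K0 d1 by (simp add: field_simps power2_eq_square)
qed

lemma transverse:
  fixes k :: "real^'n"
  assumes knz: "k \<noteq> 0" and d2: "CARD('n) \<ge> 2"
  shows "(\<Sum>i\<in>UNIV. complex_of_real (k $ i) * phibar k \<phi> i j z) = 0"
proof -
  define kc where "kc i = complex_of_real (k$i)" for i
  define K where "K = complex_of_real (ksq k)"
  define A where "A j = (\<Sum>m\<in>UNIV. kc m * \<phi> m j z)" for j
  define B where "B = (\<Sum>m\<in>UNIV. \<Sum>n\<in>UNIV. kc m * kc n * \<phi> m n z)"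
  define T where "T = (\<Sum>m\<in>UNIV. \<phi> m m z)"
  define d where "d = (of_nat CARD('n) :: complex)"
  have K0: "K \<noteq> 0" using K_nz[OF knz] by (simp add: K_def)
  have d1: "d - 1 \<noteq> 0" using d2 by (simp add: d_def)
  have sK: "(\<Sum>i\<in>UNIV. kc i * kc i) = K" by (simp add: K_eq kc_def K_def)
  have sA: "(\<Sum>i\<in>UNIV. kc i * A i) = B"
    unfolding A_def B_def by (subst sum.swap) (simp add: sum_distrib_left mult_ac)
  have pf: "phibar k \<phi> i j z = \<phi> i j z - kc i / K * A j - kc j / K * A i
      + kc i * kc j / K^2 * B - ((if i = j then 1 else 0) - kc i * kc j / K) / (d - 1) * (T - 1 / K * B)" for i j
    unfolding phibar_form kc_def K_def A_def B_def T_def d_def ..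
  define X where "X = T - 1 / K * B"
  have "(\<Sum>i\<in>UNIV. complex_of_real (k $ i) * phibar k \<phi> i j z) =
      (\<Sum>i\<in>UNIV. kc i * \<phi> i j z) - (\<Sum>i\<in>UNIV. kc i * (kc i / K * A j)) - (\<Sum>i\<in>UNIV. kc i * (kc j / K * A i))
     + (\<Sum>i\<in>UNIV. kc i * (kc i * kc j / K^2 * B)) - (\<Sum>i\<in>UNIV. kc i * (((if i = j then 1 else 0) - kc i * kc j / K) / (d - 1) * X))"
    unfolding pf X_def kc_def[symmetric] by (simp only: distrib_left right_diff_distrib sum.distrib sum_subtractf)
  also have "(\<Sum>i\<in>UNIV. kc i * \<phi> i j z) = A j" by (simp add: A_def)
  also have "(\<Sum>i\<in>UNIV. kc i * (kc i / K * A j)) = K / K * A j"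
    unfolding sK[symmetric] sum_divide_distrib sum_distrib_right by (simp add: mult_ac)
  also have "(\<Sum>i\<in>UNIV. kc i * (kc j / K * A i)) = kc j / K * B"
    unfolding sA[symmetric] sum_distrib_left by (simp add: mult_ac)
  also have "(\<Sum>i\<in>UNIV. kc i * (kc i * kc j / K^2 * B)) = K * kc j / K^2 * B"
    unfolding sK[symmetric] sum_divide_distrib sum_distrib_right by (simp add: mult_ac)
  also have "(\<Sum>i\<in>UNIV. kc i * (((if i = j then 1 else 0) - kc i * kc j / K) / (d - 1) * X))
      = (\<Sum>i\<in>UNIV. kc i * (if i = j then 1 else 0) - kc i * kc i * kc j / K) / (d - 1) * X"
    unfolding sum_distrib_right sum_divide_distrib by (rule sum.cong) (simp_all add: field_simps)
  also have "(\<Sum>i\<in>UNIV. kc i * (if i = j then 1 else 0) - kc i * kc i * kc j / K) = kc j - K * kc j / K"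
  proof -
    have dl: "(\<Sum>i\<in>UNIV. kc i * (if i = j then 1 else 0)) = kc j"
      by (subst sum.cong[OF refl, of _ _ "\<lambda>i. if i = j then kc i else 0"]) simp_all
    show ?thesis
      unfolding sK[symmetric] sum_subtractf sum_divide_distrib sum_distrib_right dl by simp
  qed
  finally show ?thesis using K0 d1 by (simp add: field_simps power2_eq_square)
qed

lemma homog:
  fixes k :: "real^'n"
  assumes knz: "k \<noteq> 0" and d2: "CARD('n) \<ge> 2"
    and sym: "\<And>a b. \<phi> a b z = \<phi> b a z"
    and psi: "\<And>a b. \<psi> a b z =
         - (\<Sum>m\<in>UNIV. complex_of_real (k $ b * k $ m) * \<phi> a m z)
         - (\<Sum>m\<in>UNIV. complex_of_real (k $ a * k $ m) * \<phi> m b z)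
         + complex_of_real (k $ a * k $ b) * trace0 \<phi> z"
  shows "phibar k \<psi> i j z = 0"
proof -
  define kc where "kc i = complex_of_real (k$i)" for i
  define K where "K = complex_of_real (ksq k)"
  define A where "A j = (\<Sum>m\<in>UNIV. kc m * \<phi> m j z)" for j
  define B where "B = (\<Sum>m\<in>UNIV. \<Sum>n\<in>UNIV. kc m * kc n * \<phi> m n z)"
  define T where "T = (\<Sum>m\<in>UNIV. \<phi> m m z)"
  define d where "d = (of_nat CARD('n) :: complex)"
  have K0: "K \<noteq> 0" using K_nz[OF knz] by (simp add: K_def)
  have d1: "d - 1 \<noteq> 0" using d2 by (simp add: d_def)
  have sK: "(\<Sum>i\<in>UNIV. kc i * kc i) = K" by (simp add: K_eq kc_def K_def)
  have sA: "(\<Sum>i\<in>UNIV. kc i * A i) = B"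
    unfolding A_def B_def by (subst sum.swap) (simp add: sum_distrib_left mult_ac)
  have psi': "\<psi> a b z = - kc b * A a - kc a * A b + kc a * kc b * T" for a b
    unfolding psi A_def T_def trace0_def kc_def
    by (subst sym) (simp add: sum_distrib_left sum_negf mult_ac)
  define Ap where "Ap j = (\<Sum>m\<in>UNIV. kc m * \<psi> m j z)" for j
  define Bp where "Bp = (\<Sum>m\<in>UNIV. \<Sum>n\<in>UNIV. kc m * kc n * \<psi> m n z)"
  define Tp where "Tp = (\<Sum>m\<in>UNIV. \<psi> m m z)"
  have Ap: "Ap j = - kc j * B - K * A j + K * kc j * T" for j
  proof -
    have "Ap j = - kc j * (\<Sum>i\<in>UNIV. kc i * A i) - (\<Sum>i\<in>UNIV. kc i * kc i) * A j + (\<Sum>i\<in>UNIV. kc i * kc i) * kc j * T"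
      unfolding Ap_def psi'
      by (simp add: sum_subtractf sum.distrib sum_distrib_left sum_distrib_right mult_ac right_diff_distrib distrib_left)
    thus ?thesis unfolding sA sK .
  qed
  have Bp: "Bp = - 2 * K * B + K * K * T"
  proof -
    have "Bp = (\<Sum>n\<in>UNIV. kc n * Ap n)"
      unfolding Bp_def Ap_def by (subst sum.swap) (simp add: sum_distrib_left mult_ac)
    also have "\<dots> = - (\<Sum>n\<in>UNIV. kc n * kc n) * B - K * (\<Sum>i\<in>UNIV. kc i * A i) + K * (\<Sum>n\<in>UNIV. kc n * kc n) * T"
      unfolding Ap by (simp add: sum_subtractf sum.distrib sum_distrib_left sum_distrib_right mult_ac right_diff_distrib distrib_left sum_negf)
    finally show ?thesis unfolding sA sK by simp
  qed
  have Tp: "Tp = - 2 * B + K * T"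
  proof -
    have "Tp = - 2 * (\<Sum>i\<in>UNIV. kc i * A i) + (\<Sum>n\<in>UNIV. kc n * kc n) * T"
      unfolding Tp_def psi'
      by (simp add: sum_subtractf sum.distrib sum_distrib_left sum_distrib_right mult_ac right_diff_distrib distrib_left sum_negf)
    thus ?thesis unfolding sA sK .
  qed
  have pf: "phibar k \<psi> i j z = \<psi> i j z - kc i / K * Ap j - kc j / K * Ap i
      + kc i * kc j / K^2 * Bp - ((if i = j then 1 else 0) - kc i * kc j / K) / (d - 1) * (Tp - 1 / K * Bp)"
    unfolding phibar_form kc_def K_def Ap_def Bp_def Tp_def d_def ..
  show ?thesis unfolding pf Ap Bp Tp psi' using K0 d1 by (simp add: field_simps power2_eq_square)
qed

theorem lemma1:
  fixes k :: "real ^ 'n" and \<phi> :: "'n \<Rightarrow> 'n \<Rightarrow> real \<Rightarrow> complex"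
  assumes d2: "CARD('n) \<ge> 2"
    and knz: "k \<noteq> 0"
    and sym: "\<And>i j z. z > 0 \<Longrightarrow> \<phi> i j z = \<phi> j i z"
    and diff1: "\<And>i j z. z > 0 \<Longrightarrow> \<phi> i j differentiable (at z)"
    and diff2: "\<And>i j z. z > 0 \<Longrightarrow> dz (\<phi> i j) differentiable (at z)"
    and eq: "\<And>i j z. z > 0 \<Longrightarrow>
       Es k (\<phi> i j) z =
         - (\<Sum>m\<in>UNIV. complex_of_real (k $ j * k $ m) * \<phi> i m z)
         - (\<Sum>m\<in>UNIV. complex_of_real (k $ i * k $ m) * \<phi> m j z)
         + complex_of_real (k $ i * k $ j) * trace0 \<phi> z"
  shows "(\<forall>z>0. (\<Sum>i\<in>UNIV. phibar k \<phi> i i z) = 0)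
       \<and> (\<forall>j z. z > 0 \<longrightarrow> (\<Sum>i\<in>UNIV. complex_of_real (k $ i) * phibar k \<phi> i j z) = 0)
       \<and> (\<forall>i j z. z > 0 \<longrightarrow> Es k (phibar k \<phi> i j) z = 0)"
proof -
  have g: "good (\<phi> a b)" for a b using diff1 diff2 by (simp add: good_def)
  show ?thesis
  proof (intro conjI allI impI)
    fix z :: real assume "z > 0"
    show "(\<Sum>i\<in>UNIV. phibar k \<phi> i i z) = 0" by (rule traceless[OF knz d2])
  next
    fix j and z :: real assume "z > 0"
    show "(\<Sum>i\<in>UNIV. complex_of_real (k $ i) * phibar k \<phi> i j z) = 0"
      by (rule transverse[OF knz d2])
  next
    fix i j and z :: real assume z: "z > 0"
    have "Es k (phibar k \<phi> i j) z = phibar k (\<lambda>a b w. Es k (\<phi> a b) w) i j z"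
      by (rule Es_phibar[OF g z])
    also have "\<dots> = 0"
      by (rule homog[where \<phi>=\<phi>, OF knz d2]) (simp_all add: sym[OF z] eq[OF z])
    finally show "Es k (phibar k \<phi> i j) z = 0" .
  qed
qed

end
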